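(* Let $N,K\ge 1$ be integers, $\mathbf{g}\in\mathbb{C}^{N}$, $\mathbf{h}_{r,k}\in\mathbb{C}^{N}$ and $h_{d,k}\in\mathbb{C}$ for $k=1,\dots,K$, with all entries of $\mathbf{g}$ and of every $\mathbf{h}_{r,k}$ nonzero and every $h_{d,k}\neq 0$. Let $\sigma^2>0$, $\sigma_r^2>0$, $P_r>0$, $T_{\max}>0$ and $E_k>0$ ($k=1,\dots,K$). Put $\mathbf{q}_k=\mathrm{diag}(\mathbf{g}^H)\mathbf{h}_{r,k}$, $\mathbf{G}=\mathrm{diag}(|[\mathbf{g}]_1|^2,\dots,|[\mathbf{g}]_N|^2)$, $\mathbf{H}_{r,k}=\mathrm{diag}(|[\mathbf{h}_{r,k}]_1|^2,\dots,|[\mathbf{h}_{r,k}]_N|^2)$. Consider the problem $$\max_{\{\tau_k\},\{p_k\},\{\mathbf{v}_k\}}\ \sum_{k=1}^K \tau_k\log_2\!\Big(1+\frac{p_k|h_{d,k}+\mathbf{v}_k^H\mathbf{q}_k|^2}{\sigma^2+\sigma_r^2\mathbf{v}_k^H\mathbf{G}\mathbf{v}_k}\Big)$$ over $\tau_k\in\mathbb{R}$, $p_k\in\mathbb{R}$, $\mathbf{v}_k\in\mathbb{C}^N$, subject to $\tau_kp_k\le E_k$ for all $k$; $\sum_{k=1}^K\tau_k\le T_{\max}$; $\tau_k\ge 0,\ p_k\ge0$ for all $k$; and $p_k\mathbf{v}_k^H\mathbf{H}_{r,k}\mathbf{v}_k+\sigma_r^2\|\mathbf{v}_k\|^2\le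 P_r$ for all $k$. Then at any optimal solution of this problem, $\tau_kp_k=E_k$ for every $k\in\{1,\dots,K\}$.
   Context: This is the sum-throughput maximization for active-IRS-aided TDMA uplink: device $k$ transmits for time $\tau_k$ with power $p_k$ and available energy $E_k$; $\mathbf{v}_k$ is the IRS reflection/amplification vector used in device $k$'s slot; $P_r$ is the IRS amplification power budget. *)

theory Defs
  imports "HOL-Analysis.Analysis"
begin

text \<open>IRS elements are indexed by a finite type 'n (N = CARD('n)), devices by a
finite type 'k (K = CARD('k)). Vectors in C^N are complex^'n.\<close>

definition herm :: "complex^'n \<Rightarrow> complex^'n \<Rightarrow> complex" where
  "herm v w = (\<Sum>i\<in>UNIV. cnj (v $ i) * w $ i)"

definition qvec :: "complex^'n \<Rightarrow> complex^'n \<Rightarrow> complex^'n" where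
  "qvec g hr = (\<chi> i. cnj (g $ i) * hr $ i)"

text \<open>v^H diag(|a_1|^2,...,|a_N|^2) v\<close>
definition diag_quad :: "complex^'n \<Rightarrow> complex^'n \<Rightarrow> real" where
  "diag_quad a v = (\<Sum>i\<in>UNIV. (cmod (a $ i))^2 * (cmod (v $ i))^2)"

definition objective ::
  "real \<Rightarrow> real \<Rightarrow> complex^'n \<Rightarrow> ('k \<Rightarrow> complex^'n) \<Rightarrow> ('k \<Rightarrow> complex)
   \<Rightarrow> ('k \<Rightarrow> real) \<Rightarrow> ('k \<Rightarrow> real) \<Rightarrow> ('k \<Rightarrow> complex^'n) \<Rightarrow> real" where
  "objective \<sigma>2 \<sigma>r2 g hr hdir \<tau> p v =
     (\<Sum>k\<in>UNIV. \<tau> k * log 2 (1 + p k * (cmod (hdir k + herm (v k) (qvec g (hr k))))^2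
                  / (\<sigma>2 + \<sigma>r2 * diag_quad g (v k))))"

definition feasible ::
  "real \<Rightarrow> real \<Rightarrow> real \<Rightarrow> ('k \<Rightarrow> real) \<Rightarrow> ('k \<Rightarrow> complex^'n)
   \<Rightarrow> ('k \<Rightarrow> real) \<Rightarrow> ('k \<Rightarrow> real) \<Rightarrow> ('k \<Rightarrow> complex^'n) \<Rightarrow> bool" where
  "feasible \<sigma>r2 Pr Tmax E hr \<tau> p v \<longleftrightarrow>
     (\<forall>k. \<tau> k * p k \<le> E k) \<and>
     (\<Sum>k\<in>UNIV. \<tau> k) \<le> Tmax \<and>
     (\<forall>k. \<tau> k \<ge> 0 \<and> p k \<ge> 0) \<and>
     (\<forall>k. p k * diag_quad (hr k) (v k) + \<sigma>r2 * (norm (v k))^2 \<le> Pr)"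

end

theory Submission
  imports Defs
begin


lemma norm_sq_vec: "(norm (x::complex^'n))^2 = (\<Sum>i\<in>UNIV. (cmod (x$i))^2)"
  by (simp add: norm_vec_def L2_set_def sum_nonneg)

lemma sum_upd1:
  fixes h :: "'k::finite \<Rightarrow> real"
  shows "(\<Sum>i\<in>UNIV. (if i = k then a else h i)) = (\<Sum>i\<in>UNIV. h i) - h k + a"
proof -
  have "(\<Sum>i\<in>UNIV. (if i = k then a else h i)) = (\<Sum>i\<in>UNIV. h i + (if i = k then a - h k else 0))"
    by (rule sum.cong) auto
  also have "\<dots> = (\<Sum>i\<in>UNIV. h i) + (a - h k)" by (simp add: sum.distrib)
  finally show ?thesis by simp
qed

lemma hd_decomp: "(z::complex) = complex_of_real (cmod z) * sgn z"
  by (cases "z = 0") (simp_all add: sgn_eq)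

lemma cnj_sgn_mult: "cnj (sgn (z::complex)) * z = complex_of_real (cmod z)"
proof (cases "z = 0")
  case False
  have "cnj z * z = complex_of_real (cmod z) * complex_of_real (cmod z)"
    by (metis complex_norm_square mult.commute of_real_mult power2_eq_square)
  then show ?thesis using False by (simp add: sgn_eq)
qed simp

definition vmod :: "real \<Rightarrow> complex \<Rightarrow> complex^'n \<Rightarrow> complex^'n \<Rightarrow> complex^'n" where
  "vmod \<beta> z q v = (\<chi> i. complex_of_real (\<beta> * cmod (v$i)) * cnj (sgn z) * sgn (q$i))"

lemma vmod_cmod:
  assumes "z \<noteq> 0" "\<forall>i. q$i \<noteq> 0" "\<beta> \<ge> 0"
  shows "cmod (vmod \<beta> z q v $ i) = \<beta> * cmod (v$i)"
  using assms by (simp add: vmod_def norm_mult norm_sgn)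

lemma vmod_dq:
  assumes "z \<noteq> 0" "\<forall>i. q$i \<noteq> 0" "\<beta> \<ge> 0"
  shows "diag_quad b (vmod \<beta> z q v) = \<beta>^2 * diag_quad b v"
  using vmod_cmod[OF assms]
  by (simp add: diag_quad_def sum_distrib_left power_mult_distrib algebra_simps)

lemma vmod_norm:
  assumes "z \<noteq> 0" "\<forall>i. q$i \<noteq> 0" "\<beta> \<ge> 0"
  shows "(norm (vmod \<beta> z q v))^2 = \<beta>^2 * (norm v)^2"
  using vmod_cmod[OF assms]
  by (simp add: norm_sq_vec sum_distrib_left power_mult_distrib)

lemma vmod_herm:
  assumes "z \<noteq> 0" "\<forall>i. q$i \<noteq> 0" "\<beta> \<ge> 0"
  shows "z + herm (vmod \<beta> z q v) q =
     complex_of_real (cmod z + \<beta> * (\<Sum>i\<in>UNIV. cmod (v$i) * cmod (q$i))) * sgn z"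
proof -
  have "herm (vmod \<beta> z q v) q = (\<Sum>i\<in>UNIV. complex_of_real (\<beta> * cmod (v$i) * cmod (q$i)) * sgn z)"
    unfolding herm_def vmod_def
  proof (rule sum.cong, simp)
    fix i
    have "cnj (complex_of_real (\<beta> * cmod (v $ i)) * cnj (sgn z) * sgn (q $ i)) * q $ i
       = complex_of_real (\<beta> * cmod (v $ i)) * sgn z * (cnj (sgn (q $ i)) * q $ i)"
      by simp
    also have "\<dots> = complex_of_real (\<beta> * cmod (v $ i) * cmod (q $ i)) * sgn z"
      by (simp add: cnj_sgn_mult)
    finally show "cnj (((\<chi> i. complex_of_real (\<beta> * cmod (v $ i)) * cnj (sgn z) * sgn (q $ i))) $ i) * q $ i
       = complex_of_real (\<beta> * cmod (v $ i) * cmod (q $ i)) * sgn z" by simp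
  qed
  also have "\<dots> = complex_of_real (\<beta> * (\<Sum>i\<in>UNIV. cmod (v$i) * cmod (q$i))) * sgn z"
    by (simp add: sum_distrib_right sum_distrib_left mult.assoc)
  finally show ?thesis
    by (subst (1) hd_decomp) (simp add: algebra_simps)
qed

lemma herm_bound: "cmod (z + herm v q) \<le> cmod z + (\<Sum>i\<in>UNIV. cmod (v$i) * cmod (q$i))"
proof -
  have "cmod (herm v q) \<le> (\<Sum>i\<in>UNIV. cmod (cnj (v$i) * q$i))"
    unfolding herm_def by (rule norm_sum)
  also have "\<dots> = (\<Sum>i\<in>UNIV. cmod (v$i) * cmod (q$i))" by (simp add: norm_mult)
  finally show ?thesis using norm_triangle_ineq[of z "herm v q"] by linarith
qed

lemma snr_improve:
  fixes z :: complex and q a v :: "complex^'n" and \<sigma>2 \<sigma>r2 p p' \<beta> :: real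
  assumes z: "z \<noteq> 0" and q: "\<forall>i. q$i \<noteq> 0" and s: "\<sigma>2 > 0" "\<sigma>r2 > 0"
    and p: "0 \<le> p" "p < p'" and b: "\<beta> = sqrt (p / p')"
  shows "p * (cmod (z + herm v q))^2 / (\<sigma>2 + \<sigma>r2 * diag_quad a v)
     < p' * (cmod (z + herm (vmod \<beta> z q v) q))^2 / (\<sigma>2 + \<sigma>r2 * diag_quad a (vmod \<beta> z q v))"
proof -
  define S where "S = (\<Sum>i\<in>UNIV. cmod (v$i) * cmod (q$i))"
  have S0: "S \<ge> 0" unfolding S_def by (simp add: sum_nonneg)
  have pp: "p' > 0" using p by linarith
  have b0: "\<beta> \<ge> 0" using b p pp by simp
  have b2: "\<beta>^2 = p / p'" using b p pp by (simp add: divide_nonneg_pos)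
  have b1: "\<beta>^2 \<le> 1" using b2 p pp by simp
  have sb: "sqrt p' * \<beta> = sqrt p" using b pp by (simp add: real_sqrt_divide)
  have eqn: "cmod (z + herm (vmod \<beta> z q v) q) = cmod z + \<beta> * S"
  proof -
    have "z + herm (vmod \<beta> z q v) q = complex_of_real (cmod z + \<beta> * S) * sgn z"
      using vmod_herm[OF z q b0, of v] unfolding S_def .
    then have "cmod (z + herm (vmod \<beta> z q v) q) = cmod (complex_of_real (cmod z + \<beta> * S)) * cmod (sgn z)"
      by (simp only: norm_mult)
    also have "\<dots> = \<bar>cmod z + \<beta> * S\<bar>" using z by (simp only: norm_of_real norm_sgn) simp
    finally show ?thesis using S0 b0 by simp
  qed
  have bnd: "cmod (z + herm v q) \<le> cmod z + S" using herm_bound unfolding S_def by blast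
  have lt: "sqrt p * cmod (z + herm v q) < sqrt p' * (cmod z + \<beta> * S)"
  proof -
    have "sqrt p * cmod (z + herm v q) \<le> sqrt p * (cmod z + S)"
      using bnd p by (intro mult_left_mono) auto
    also have "\<dots> < sqrt p' * cmod z + sqrt p * S"
      using p z by (simp add: algebra_simps)
    also have "\<dots> = sqrt p' * (cmod z + \<beta> * S)"
      using sb by (simp add: algebra_simps)
    finally show ?thesis .
  qed
  have num: "p * (cmod (z + herm v q))^2 < p' * (cmod z + \<beta> * S)^2"
  proof -
    have "(sqrt p * cmod (z + herm v q))^2 < (sqrt p' * (cmod z + \<beta> * S))^2"
      using lt p by (intro power_strict_mono) auto
    then show ?thesis using p pp by (simp add: power_mult_distrib)
  qed
  define D where "D = \<sigma>2 + \<sigma>r2 * diag_quad a v"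
  define D' where "D' = \<sigma>2 + \<sigma>r2 * diag_quad a (vmod \<beta> z q v)"
  have dq0: "diag_quad a v \<ge> 0" by (simp add: diag_quad_def sum_nonneg)
  have D'eq: "D' = \<sigma>2 + \<sigma>r2 * (\<beta>^2 * diag_quad a v)"
    unfolding D'_def using vmod_dq[OF z q b0] by simp
  have D'pos: "D' > 0" unfolding D'eq using s dq0 by (simp add: add_pos_nonneg)
  have DD: "D' \<le> D" unfolding D'eq D_def using s dq0 b1
    by (simp add: mult_le_cancel_left_pos mult_left_le_one_le)
  have "p * (cmod (z + herm v q))^2 / D < p' * (cmod z + \<beta> * S)^2 / D"
    using num D'pos DD by (simp add: divide_strict_right_mono)
  also have "\<dots> \<le> p' * (cmod z + \<beta> * S)^2 / D'"
    using D'pos DD pp by (intro divide_left_mono) auto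
  finally show ?thesis unfolding D_def D'_def eqn .
qed

lemma dq_nonneg: "diag_quad a v \<ge> 0" by (simp add: diag_quad_def sum_nonneg)
lemma dq_zero[simp]: "diag_quad a 0 = 0" by (simp add: diag_quad_def)
lemma herm_zero[simp]: "herm 0 q = 0" by (simp add: herm_def)

theorem lemma1:
  fixes g :: "complex^'n" and hr :: "'k::finite \<Rightarrow> complex^'n"
    and hdir :: "'k \<Rightarrow> complex"
    and \<sigma>2 \<sigma>r2 Pr Tmax :: real and E :: "'k \<Rightarrow> real"
    and \<tau> p :: "'k \<Rightarrow> real" and v :: "'k \<Rightarrow> complex^'n"
  assumes g_nz: "\<forall>i. g $ i \<noteq> 0"
    and hr_nz: "\<forall>k i. hr k $ i \<noteq> 0"
    and hd_nz: "\<forall>k. hdir k \<noteq> 0"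
    and "\<sigma>2 > 0" and "\<sigma>r2 > 0" and "Pr > 0" and "Tmax > 0"
    and "\<forall>k. E k > 0"
    and opt_feas: "feasible \<sigma>r2 Pr Tmax E hr \<tau> p v"
    and opt_max: "\<forall>\<tau>' p' v'. feasible \<sigma>r2 Pr Tmax E hr \<tau>' p' v' \<longrightarrow>
          objective \<sigma>2 \<sigma>r2 g hr hdir \<tau>' p' v' \<le> objective \<sigma>2 \<sigma>r2 g hr hdir \<tau> p v"
  shows "\<forall>k. \<tau> k * p k = E k"
proof (rule ccontr)
  note s = \<open>\<sigma>2 > 0\<close> \<open>\<sigma>r2 > 0\<close>
  note Epos = \<open>\<forall>k. E k > 0\<close>
  assume "\<not> (\<forall>k. \<tau> k * p k = E k)"
  then obtain k where nk: "\<tau> k * p k \<noteq> E k" by blast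
  have F1: "\<forall>k. \<tau> k * p k \<le> E k" and F2: "(\<Sum>k\<in>UNIV. \<tau> k) \<le> Tmax"
    and F3: "\<forall>k. \<tau> k \<ge> 0 \<and> p k \<ge> 0"
    and F4: "\<forall>k. p k * diag_quad (hr k) (v k) + \<sigma>r2 * (norm (v k))^2 \<le> Pr"
    using opt_feas unfolding feasible_def by auto
  have ltk: "\<tau> k * p k < E k" using F1 nk by (simp add: order_le_neq_trans)
  define R where "R = (\<lambda>i pp vv. log 2 (1 + pp * (cmod (hdir i + herm vv (qvec g (hr i))))^2
                  / (\<sigma>2 + \<sigma>r2 * diag_quad g vv)))"
  have objR: "\<And>\<tau>' p' v'. objective \<sigma>2 \<sigma>r2 g hr hdir \<tau>' p' v' = (\<Sum>i\<in>UNIV. \<tau>' i * R i (p' i) (v' i))"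
    by (simp add: objective_def R_def)
  define obj where "obj = objective \<sigma>2 \<sigma>r2 g hr hdir \<tau> p v"
  have snr0: "pp * (cmod (hdir i + herm vv (qvec g (hr i))))^2 / (\<sigma>2 + \<sigma>r2 * diag_quad g vv) \<ge> 0"
    if "pp \<ge> 0" for pp i vv
    using that s dq_nonneg[of g vv] by (intro divide_nonneg_pos) (auto intro: add_pos_nonneg)
  have R0: "R i pp vv \<ge> 0" if "pp \<ge> 0" for pp i vv
    unfolding R_def using snr0[OF that, of i vv] by simp
  have Rzero: "R i pp 0 = log 2 (1 + pp * (cmod (hdir i))^2 / \<sigma>2)" for i pp
    by (simp add: R_def)
  show False
  proof (cases "\<tau> k > 0")
    case True
    define p' where "p' = E k / \<tau> k"
    have pp: "p k < p'" unfolding p'_def using ltk True by (simp add: pos_less_divide_eq mult.commute)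
    have pk0: "p k \<ge> 0" using F3 by auto
    have p'0: "p' > 0" using pp pk0 by linarith
    define \<beta> where "\<beta> = sqrt (p k / p')"
    have b0: "\<beta> \<ge> 0" unfolding \<beta>_def using pk0 p'0 by simp
    have b2: "\<beta>^2 = p k / p'" unfolding \<beta>_def using pk0 p'0 by simp
    have b1: "\<beta>^2 \<le> 1" using b2 pp p'0 by simp
    define q where "q = qvec g (hr k)"
    have qnz: "\<forall>i. q$i \<noteq> 0" unfolding q_def qvec_def using g_nz hr_nz by simp
    have hk: "hdir k \<noteq> 0" using hd_nz by blast
    define v' where "v' = vmod \<beta> (hdir k) q (v k)"
    have imp: "R k (p k) (v k) < R k p' v'"
    proof -
      have "p k * (cmod (hdir k + herm (v k) q))^2 / (\<sigma>2 + \<sigma>r2 * diag_quad g (v k))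
         < p' * (cmod (hdir k + herm v' q))^2 / (\<sigma>2 + \<sigma>r2 * diag_quad g v')"
        unfolding v'_def by (rule snr_improve[OF hk qnz s pk0 pp \<beta>_def])
      moreover have "p k * (cmod (hdir k + herm (v k) q))^2 / (\<sigma>2 + \<sigma>r2 * diag_quad g (v k)) \<ge> 0"
        using snr0[OF pk0] unfolding q_def by blast
      ultimately show ?thesis unfolding R_def q_def by simp
    qed
    have feas: "feasible \<sigma>r2 Pr Tmax E hr \<tau> (p(k := p')) (v(k := v'))"
    proof -
      have "p' * diag_quad (hr k) v' + \<sigma>r2 * (norm v')^2 \<le> Pr"
      proof -
        have "p' * diag_quad (hr k) v' + \<sigma>r2 * (norm v')^2
            = p' * \<beta>^2 * diag_quad (hr k) (v k) + \<sigma>r2 * (\<beta>^2 * (norm (v k))^2)"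
          unfolding v'_def using vmod_dq[OF hk qnz b0] vmod_norm[OF hk qnz b0] by simp
        also have "\<dots> = p k * diag_quad (hr k) (v k) + \<sigma>r2 * (\<beta>^2 * (norm (v k))^2)"
          using b2 p'0 by simp
        also have "\<dots> \<le> p k * diag_quad (hr k) (v k) + \<sigma>r2 * (norm (v k))^2"
          using b1 s by (simp add: mult_left_le_one_le)
        also have "\<dots> \<le> Pr" using F4 by blast
        finally show ?thesis .
      qed
      moreover have "\<tau> k * p' \<le> E k" unfolding p'_def using True by simp
      ultimately show ?thesis using F1 F2 F3 F4 p'0 unfolding feasible_def by auto
    qed
    have "objective \<sigma>2 \<sigma>r2 g hr hdir \<tau> (p(k := p')) (v(k := v'))
        = (\<Sum>i\<in>UNIV. if i = k then \<tau> k * R k p' v' else \<tau> i * R i (p i) (v i))"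
      unfolding objR by (rule sum.cong) auto
    also have "\<dots> = obj - \<tau> k * R k (p k) (v k) + \<tau> k * R k p' v'"
      unfolding sum_upd1 obj_def objR ..
    also have "\<dots> > obj" using imp True by simp
    finally show False using opt_max feas unfolding obj_def by force
  next
    case False
    have "\<tau> k \<ge> 0" using F3 by blast
    then have t0: "\<tau> k = 0" using False by linarith
    define c where "c = E k * (cmod (hdir k))^2 / \<sigma>2"
    have c0: "c > 0" unfolding c_def using Epos hd_nz s by simp
    have Rc: "R k (E k / t) 0 = log 2 (1 + c / t)" for t
      unfolding Rzero c_def by (simp add: mult.commute)
    show False
    proof (cases "(\<Sum>i\<in>UNIV. \<tau> i) < Tmax")
      case True
      define t where "t = Tmax - (\<Sum>i\<in>UNIV. \<tau> i)"
      have t0': "t > 0" unfolding t_def using True by simp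
      have feas: "feasible \<sigma>r2 Pr Tmax E hr (\<tau>(k := t)) (p(k := E k / t)) (v(k := 0))"
      proof -
        have "(\<Sum>i\<in>UNIV. (\<tau>(k := t)) i) = (\<Sum>i\<in>UNIV. if i = k then t else \<tau> i)"
          by (rule sum.cong) auto
        also have "\<dots> = Tmax" unfolding sum_upd1 t_def using t0 by simp
        finally have "(\<Sum>i\<in>UNIV. (\<tau>(k := t)) i) \<le> Tmax" by simp
        then show ?thesis using F1 F3 F4 t0' Epos \<open>Pr > 0\<close> unfolding feasible_def
          by (auto simp: less_imp_le)
      qed
      have "objective \<sigma>2 \<sigma>r2 g hr hdir (\<tau>(k := t)) (p(k := E k / t)) (v(k := 0))
          = (\<Sum>i\<in>UNIV. if i = k then t * R k (E k / t) 0 else \<tau> i * R i (p i) (v i))"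
        unfolding objR by (rule sum.cong) auto
      also have "\<dots> = obj + t * log 2 (1 + c / t)"
        unfolding sum_upd1 obj_def objR Rc using t0 by simp
      also have "\<dots> > obj"
      proof -
        have "1 + c / t > 1" using t0' c0 by simp
        then have "log 2 (1 + c / t) > 0" by simp
        then show ?thesis using t0' by simp
      qed
      finally show False using opt_max feas unfolding obj_def by force
    next
      case False
      then have sT: "(\<Sum>i\<in>UNIV. \<tau> i) > 0" using \<open>Tmax > 0\<close> by simp
      obtain j where j: "\<tau> j > 0"
      proof (rule ccontr)
        assume "\<not> thesis"
        then have "\<forall>i. \<tau> i \<le> 0" using that by (meson not_le)
        then have "(\<Sum>i\<in>UNIV. \<tau> i) \<le> 0" by (simp add: sum_nonpos)
        then show False using sT by simp
      qed
      have jk: "j \<noteq> k" using j t0 by auto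
      define Rj where "Rj = R j (p j) (v j)"
      have Rj0: "Rj \<ge> 0" unfolding Rj_def using R0 F3 by blast
      define e where "e = min (\<tau> j) (c / 2 powr Rj)"
      have e0: "e > 0" unfolding e_def using j c0 by simp
      have ej: "e \<le> \<tau> j" unfolding e_def by simp
      have ec: "e * 2 powr Rj \<le> c" unfolding e_def
        by (smt (verit) divide_pos_pos mult.commute nonzero_mult_div_cancel_left powr_gt_zero times_divide_eq_right min.cobounded2 mult_right_mono)
      have gain: "log 2 (1 + c / e) > Rj"
      proof -
        have "2 powr Rj \<le> c / e" using ec e0 by (simp add: pos_le_divide_eq mult.commute)
        then have "2 powr Rj < 1 + c / e" by simp
        then have "log 2 (2 powr Rj) < log 2 (1 + c / e)"
          using c0 e0 divide_pos_pos[of c e] by (subst log_less_cancel_iff) (auto simp del: divide_pos_pos)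
        then show ?thesis by simp
      qed
      define \<tau>' where "\<tau>' = \<tau>(j := \<tau> j - e, k := e)"
      define p' where "p' = p(k := E k / e)"
      define v' where "v' = v(k := 0)"
      have sum\<tau>: "(\<Sum>i\<in>UNIV. \<tau>' i) = (\<Sum>i\<in>UNIV. \<tau> i)"
      proof -
        have "(\<Sum>i\<in>UNIV. \<tau>' i) = (\<Sum>i\<in>UNIV. if i = k then e else (if i = j then \<tau> j - e else \<tau> i))"
          unfolding \<tau>'_def by (rule sum.cong) auto
        also have "\<dots> = (\<Sum>i\<in>UNIV. \<tau> i)"
          unfolding sum_upd1 using jk t0 by simp
        finally show ?thesis .
      qed
      have feas: "feasible \<sigma>r2 Pr Tmax E hr \<tau>' p' v'"
      proof -
        have a1: "\<forall>i. \<tau>' i * p' i \<le> E i"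
        proof
          fix i
          show "\<tau>' i * p' i \<le> E i"
          proof (cases "i = k")
            case True then show ?thesis unfolding \<tau>'_def p'_def using e0 by simp
          next
            case False
            show ?thesis
            proof (cases "i = j")
              case True
              have "(\<tau> j - e) * p j \<le> \<tau> j * p j" using e0 F3 by (simp add: mult_right_mono)
              then show ?thesis using True False F1 unfolding \<tau>'_def p'_def
                by (smt (verit) fun_upd_other fun_upd_same)
            next
              case False2: False
              then show ?thesis using False F1 unfolding \<tau>'_def p'_def by simp
            qed
          qed
        qed
        have a3: "\<forall>i. \<tau>' i \<ge> 0 \<and> p' i \<ge> 0"
          unfolding \<tau>'_def p'_def using F3 e0 ej Epos by (auto simp: less_imp_le)
        have a4: "\<forall>i. p' i * diag_quad (hr i) (v' i) + \<sigma>r2 * (norm (v' i))^2 \<le> Pr"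
          unfolding p'_def v'_def using F4 \<open>Pr > 0\<close> by (auto simp: less_imp_le)
        show ?thesis unfolding feasible_def using a1 a3 a4 sum\<tau> F2 by simp
      qed
      have "objective \<sigma>2 \<sigma>r2 g hr hdir \<tau>' p' v'
          = (\<Sum>i\<in>UNIV. if i = k then e * R k (E k / e) 0
               else (if i = j then (\<tau> j - e) * Rj else \<tau> i * R i (p i) (v i)))"
        unfolding objR \<tau>'_def p'_def v'_def Rj_def by (rule sum.cong) auto
      also have "\<dots> = obj - \<tau> j * Rj + (\<tau> j - e) * Rj + e * log 2 (1 + c / e)"
        unfolding sum_upd1 obj_def objR Rc Rj_def using jk t0 by simp
      also have "\<dots> = obj + e * (log 2 (1 + c / e) - Rj)" by (simp add: algebra_simps)
      also have "\<dots> > obj" using e0 gain by simp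
      finally show False using opt_max feas unfolding obj_def by force
    qed
  qed
qed

end
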